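(* Let $p,r$ be positive integers, $q=p+r$, and let $\Phi^*:V^*_{pq}(\mathbb{H})\to\mathbb{C}^{r\times 2p}$ be the map $$\Phi^*(Q)=\begin{pmatrix}U & -V\end{pmatrix}\begin{pmatrix}Z-X & Y-W\\ \bar Y+\bar W & \bar Z+\bar X\end{pmatrix}^{-1},$$ where $Q=(Q_0;Q_1;Q_2)$ with $Q_0=Z+Wj$, $Q_1=X+Yj$, $Q_2=U+Vj$ ($Z,W,X,Y\in\mathbb{C}^{p\times p}$, $U,V\in\mathbb{C}^{r\times p}$). Then the complex valued components of $\Phi^*$ constitute an orthogonal harmonic family of $\mathbf{GL}_p(\mathbb{H})$-invariant functions on $V^*_{pq}(\mathbb{H})$, equipped with the Euclidean metric.
   Context: $\mathbb{H}=\{z+wj: z,w\in\mathbb{C}\}$. $U^*_{pq}(\mathbb{H})=\{Q\in\mathbb{H}^{(p+q)\times p}: Q^*Q \text{ invertible}\}$, with $Q_0,Q_1$ having $p$ rows and $Q_2$ having $r$ rows, and $V^*_{pq}(\mathbb{H})=\{Q\in U^*_{pq}(\mathbb{H}): \det\begin{pmatrix}Z-X & Y-W\\ \bar Y+\bar W & \bar Z+\bar X\end{pmatrix}\neq0\}$. $\mathbf{GL}_p(\mathbb{H})$ acts by right multiplication. The Euclidean metric is $\langle X,Y\rangle=\mathfrak{Re}\,\mathrm{trace}(X^*Y)$. For a Riemannian manifold $(M,g)$ and complex functions $\phi,\psi$, $\tau(\phi)$ is the Laplace–Beltrami operator (extended complex-linearly) and $\kappa(\phi,\psi)=g(\mathrm{grad}\,\phi,\mathrm{grad}\,\psi)$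 with $g$ extended complex-bilinearly. A set $\Omega$ of complex functions is an orthogonal harmonic family if $\tau(\phi)=0$ and $\kappa(\phi,\psi)=0$ for all $\phi,\psi\in\Omega$. *)

theory Defs
  imports "HOL-Analysis.Analysis"
begin

text \<open>A quaternionic m x n matrix A + B j (A, B complex m x n matrices) is encoded
  as the pair (A, B).  Rows are indexed by 'm, columns by 'n.  Quaternion rule: j z = conj z j.\<close>

type_synonym ('n, 'm) hmat = "(complex ^ 'n ^ 'm) \<times> (complex ^ 'n ^ 'm)"

definition cmat_cnj :: "complex ^ 'n::finite ^ 'm::finite \<Rightarrow> complex ^ 'n ^ 'm" where
  "cmat_cnj A = (\<chi> i j. cnj (A $ i $ j))"

definition hmat_mult :: "('n::finite, 'm::finite) hmat \<Rightarrow> ('k::finite, 'n) hmat \<Rightarrow> ('k, 'm) hmat" where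
  "hmat_mult Q G = (case Q of (A, B) \<Rightarrow> case G of (C, D) \<Rightarrow>
      (A ** C - B ** cmat_cnj D, A ** D + B ** cmat_cnj C))"

definition hmat_adj :: "('n::finite, 'm::finite) hmat \<Rightarrow> ('m, 'n) hmat" where
  "hmat_adj Q = (case Q of (A, B) \<Rightarrow> (cmat_cnj (transpose A), - transpose B))"

definition hmat_one :: "('n::finite, 'n) hmat" where
  "hmat_one = (mat 1, 0)"

definition hmat_invertible :: "('n::finite, 'n) hmat \<Rightarrow> bool" where
  "hmat_invertible G \<longleftrightarrow> (\<exists>H. hmat_mult G H = hmat_one \<and> hmat_mult H G = hmat_one)"

text \<open>A point Q = (Q0; Q1; Q2) of H^{(p+q) x p} with Q0, Q1 of size p x p and Q2 of size r x p.
  As a real vector space this is a Euclidean space whose (product) inner product is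
  Re trace (X^* Y), i.e. the Euclidean metric.\<close>

type_synonym ('p, 'r) hpoint = "('p, 'p) hmat \<times> ('p, 'p) hmat \<times> ('p, 'r) hmat"

definition Ustar :: "('p::finite, 'r::finite) hpoint set" where
  "Ustar = {Q. case Q of (Q0, Q1, Q2) \<Rightarrow>
      hmat_invertible (hmat_mult (hmat_adj Q0) Q0 + hmat_mult (hmat_adj Q1) Q1
                       + hmat_mult (hmat_adj Q2) Q2)}"

definition Mmat :: "('p::finite, 'r::finite) hpoint \<Rightarrow> complex ^ ('p + 'p) ^ ('p + 'p)" where
  "Mmat Q = (case Q of ((Z, W), (X, Y), _) \<Rightarrow>
     (\<chi> i j. case i of
        Inl a \<Rightarrow> (case j of Inl b \<Rightarrow> (Z - X) $ a $ b | Inr b \<Rightarrow> (Y - W) $ a $ b)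
      | Inr a \<Rightarrow> (case j of Inl b \<Rightarrow> cnj ((Y + W) $ a $ b) | Inr b \<Rightarrow> cnj ((Z + X) $ a $ b))))"

definition Vstar :: "('p::finite, 'r::finite) hpoint set" where
  "Vstar = {Q \<in> Ustar. det (Mmat Q) \<noteq> 0}"

definition UVmat :: "('p::finite, 'r::finite) hpoint \<Rightarrow> complex ^ ('p + 'p) ^ 'r" where
  "UVmat Q = (case Q of (_, _, (U, V)) \<Rightarrow>
     (\<chi> i j. case j of Inl b \<Rightarrow> U $ i $ b | Inr b \<Rightarrow> - (V $ i $ b)))"

definition PhiStar :: "('p::finite, 'r::finite) hpoint \<Rightarrow> complex ^ ('p + 'p) ^ 'r" where
  "PhiStar Q = UVmat Q ** matrix_inv (Mmat Q)"

definition hact :: "('p::finite, 'r::finite) hpoint \<Rightarrow> ('p, 'p) hmat \<Rightarrow> ('p, 'r) hpoint" where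
  "hact Q g = (case Q of (Q0, Q1, Q2) \<Rightarrow> (hmat_mult Q0 g, hmat_mult Q1 g, hmat_mult Q2 g))"

definition dderiv :: "'a::euclidean_space \<Rightarrow> ('a \<Rightarrow> complex) \<Rightarrow> 'a \<Rightarrow> complex" where
  "dderiv v f x = vector_derivative (\<lambda>t::real. f (x + t *\<^sub>R v)) (at 0)"

definition tau :: "('a::euclidean_space \<Rightarrow> complex) \<Rightarrow> 'a \<Rightarrow> complex" where
  "tau f x = (\<Sum>b\<in>Basis. dderiv b (dderiv b f) x)"

text \<open>kappa(f,g) = g(grad f, grad g), metric extended complex-bilinearly.\<close>
definition kappa :: "('a::euclidean_space \<Rightarrow> complex) \<Rightarrow> ('a \<Rightarrow> complex) \<Rightarrow> 'a \<Rightarrow> complex" where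
  "kappa f g x = (\<Sum>b\<in>Basis. dderiv b f x * dderiv b g x)"

definition orthogonal_harmonic_family ::
    "'a::euclidean_space set \<Rightarrow> ('a \<Rightarrow> complex) set \<Rightarrow> bool" where
  "orthogonal_harmonic_family M \<Omega> \<longleftrightarrow>
     (\<forall>\<phi>\<in>\<Omega>. \<forall>x\<in>M. tau \<phi> x = 0) \<and>
     (\<forall>\<phi>\<in>\<Omega>. \<forall>\<psi>\<in>\<Omega>. \<forall>x\<in>M. kappa \<phi> \<psi> x = 0)"

end

theory Submission
  imports Defs
begin



lemma sum_UNIV_sum: "(\<Sum>x\<in>(UNIV::('a::finite+'b::finite) set). f x) = (\<Sum>a\<in>UNIV. f (Inl a)) + (\<Sum>b\<in>UNIV. f (Inr b))"
  by (subst UNIV_Plus_UNIV[symmetric], subst sum.Plus) (auto simp: o_def)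

definition Nmat :: "('p::finite, 'p) hmat \<Rightarrow> complex ^ ('p + 'p) ^ ('p + 'p)" where
  "Nmat g = (case g of (C, D) \<Rightarrow>
     (\<chi> i j. case i of
        Inl a \<Rightarrow> (case j of Inl b \<Rightarrow> C $ a $ b | Inr b \<Rightarrow> - D $ a $ b)
      | Inr a \<Rightarrow> (case j of Inl b \<Rightarrow> cnj (D $ a $ b) | Inr b \<Rightarrow> cnj (C $ a $ b))))"

lemma Mmat_hact: "Mmat (hact Q g) = Mmat Q ** Nmat g"
proof -
  obtain Z W X Y U V C D where Q: "Q = ((Z,W),(X,Y),(U,V))" and g: "g = (C,D)"
    by (metis prod.exhaust)
  show ?thesis
    unfolding Q g
    apply (simp add: vec_eq_iff Mmat_def hact_def hmat_mult_def Nmat_def split: sum.split)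
    apply (simp add: matrix_matrix_mult_def sum_UNIV_sum cmat_cnj_def algebra_simps sum.distrib sum_subtractf sum_negf)
    done
qed

lemma UVmat_hact: "UVmat (hact Q g) = UVmat Q ** Nmat g"
proof -
  obtain Z W X Y U V C D where Q: "Q = ((Z,W),(X,Y),(U,V))" and g: "g = (C,D)"
    by (metis prod.exhaust)
  show ?thesis
    unfolding Q g
    apply (simp add: vec_eq_iff UVmat_def hact_def hmat_mult_def Nmat_def split: sum.split)
    apply (simp add: matrix_matrix_mult_def sum_UNIV_sum cmat_cnj_def algebra_simps sum.distrib sum_subtractf sum_negf)
    done
qed

lemma Nmat_mult: "Nmat (hmat_mult g h) = Nmat g ** Nmat h"
proof -
  obtain C D E F where g: "g = (C,D)" and h: "h = (E,F)"
    by (metis prod.exhaust)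
  show ?thesis
    unfolding g h
    apply (simp add: vec_eq_iff hmat_mult_def Nmat_def split: sum.split)
    apply (simp add: matrix_matrix_mult_def sum_UNIV_sum cmat_cnj_def algebra_simps sum.distrib sum_subtractf sum_negf)
    done
qed

lemma Nmat_one: "Nmat hmat_one = mat 1"
  by (simp add: vec_eq_iff hmat_one_def Nmat_def mat_def split: sum.split)



lemma mm_add_l: "(A + B) ** (C::'a::semiring_1^_^_) = A ** C + B ** C"
  by (simp add: vec_eq_iff matrix_matrix_mult_def distrib_right sum.distrib)
lemma mm_add_r: "(C::'a::semiring_1^_^_) ** (A + B) = C ** A + C ** B"
  by (rule matrix_add_ldistrib)
lemma mm_diff_l: "(A - B) ** (C::'a::ring_1^_^_) = A ** C - B ** C"
  by (simp add: vec_eq_iff matrix_matrix_mult_def left_diff_distrib sum_subtractf)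
lemma mm_diff_r: "(C::'a::ring_1^_^_) ** (A - B) = C ** A - C ** B"
  by (simp add: vec_eq_iff matrix_matrix_mult_def right_diff_distrib sum_subtractf)
lemma mm_neg_l: "(- A) ** (C::'a::ring_1^_^_) = - (A ** C)"
  by (simp add: vec_eq_iff matrix_matrix_mult_def sum_negf)
lemma mm_neg_r: "(C::'a::ring_1^_^_) ** (- A) = - (C ** A)"
  by (simp add: vec_eq_iff matrix_matrix_mult_def sum_negf)
lemma cnj_mm: "cmat_cnj (A ** B) = cmat_cnj A ** cmat_cnj B"
  by (simp add: vec_eq_iff matrix_matrix_mult_def cmat_cnj_def)
lemma cnj_add: "cmat_cnj (A + B) = cmat_cnj A + cmat_cnj B"
  by (simp add: vec_eq_iff cmat_cnj_def)
lemma cnj_diff: "cmat_cnj (A - B) = cmat_cnj A - cmat_cnj B"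
  by (simp add: vec_eq_iff cmat_cnj_def)
lemma cnj_neg: "cmat_cnj (- A) = - cmat_cnj A"
  by (simp add: vec_eq_iff cmat_cnj_def)
lemma cnj_cnj: "cmat_cnj (cmat_cnj A) = A"
  by (simp add: vec_eq_iff cmat_cnj_def)
lemma cnj_transpose: "cmat_cnj (transpose A) = transpose (cmat_cnj A)"
  by (simp add: vec_eq_iff cmat_cnj_def transpose_def)
lemma transpose_mm: "transpose (A ** B) = transpose B ** transpose (A::'a::comm_semiring_1^_^_)"
  by (simp add: vec_eq_iff matrix_matrix_mult_def transpose_def mult.commute)
lemma transpose_add': "transpose (A + B) = transpose A + transpose B"
  by (simp add: vec_eq_iff transpose_def)
lemma transpose_diff': "transpose (A - B) = transpose A - transpose (B::'a::ab_group_add^_^_)"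
  by (simp add: vec_eq_iff transpose_def)
lemma transpose_neg': "transpose (- A) = - transpose (A::'a::ab_group_add^_^_)"
  by (simp add: vec_eq_iff transpose_def)
lemma cnj_mat1: "cmat_cnj (mat 1) = mat 1"
  by (simp add: vec_eq_iff cmat_cnj_def mat_def)
lemma transpose_zero': "transpose 0 = (0::'a::zero^_^_)"
  by (simp add: vec_eq_iff transpose_def)
lemma cnj_zero: "cmat_cnj 0 = 0"
  by (simp add: vec_eq_iff cmat_cnj_def)

lemmas mm_simps = mm_add_l mm_add_r mm_diff_l mm_diff_r mm_neg_l mm_neg_r cnj_mm cnj_add cnj_diff
  cnj_neg cnj_cnj matrix_mul_assoc transpose_mm transpose_add' transpose_diff' transpose_neg' cnj_transpose
  cnj_mat1 cnj_zero transpose_zero'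

lemma hmat_mult_assoc:
  "hmat_mult (hmat_mult X Y) Z = hmat_mult X (hmat_mult Y Z)"
  by (cases X; cases Y; cases Z) (simp add: hmat_mult_def mm_simps algebra_simps)

lemma hmat_adj_mult:
  "hmat_adj (hmat_mult X Y) = hmat_mult (hmat_adj Y) (hmat_adj X)"
  by (cases X; cases Y) (simp add: hmat_mult_def hmat_adj_def mm_simps algebra_simps)

lemma hmat_mult_add_l:
  "hmat_mult (X + Y) Z = hmat_mult X Z + hmat_mult Y Z"
  by (cases X; cases Y; cases Z) (simp add: hmat_mult_def mm_simps algebra_simps)

lemma hmat_mult_add_r:
  "hmat_mult Z (X + Y) = hmat_mult Z X + hmat_mult Z Y"
  by (cases X; cases Y; cases Z) (simp add: hmat_mult_def mm_simps algebra_simps)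

lemma hmat_one_l: "hmat_mult hmat_one X = X"
  by (cases X) (simp add: hmat_mult_def hmat_one_def mm_simps)

lemma hmat_one_r: "hmat_mult X hmat_one = X"
  by (cases X) (simp add: hmat_mult_def hmat_one_def mm_simps)

lemma hmat_adj_one: "hmat_adj hmat_one = hmat_one"
  by (simp add: hmat_adj_def hmat_one_def mm_simps)

lemma Ustar_hact:
  assumes Q: "Q \<in> Ustar" and g: "hmat_invertible g"
  shows "hact Q g \<in> Ustar"
proof -
  obtain Q0 Q1 Q2 where QQ: "Q = (Q0, Q1, Q2)" by (metis prod.exhaust)
  define S where "S = hmat_mult (hmat_adj Q0) Q0 + hmat_mult (hmat_adj Q1) Q1 + hmat_mult (hmat_adj Q2) Q2"
  obtain T where T: "hmat_mult S T = hmat_one" "hmat_mult T S = hmat_one"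
    using Q unfolding Ustar_def QQ S_def hmat_invertible_def by auto
  obtain h where h: "hmat_mult g h = hmat_one" "hmat_mult h g = hmat_one"
    using g unfolding hmat_invertible_def by auto
  have S': "hmat_mult (hmat_adj (hmat_mult Q0 g)) (hmat_mult Q0 g) + hmat_mult (hmat_adj (hmat_mult Q1 g)) (hmat_mult Q1 g)
       + hmat_mult (hmat_adj (hmat_mult Q2 g)) (hmat_mult Q2 g) = hmat_mult (hmat_adj g) (hmat_mult S g)"
    by (simp add: S_def hmat_adj_mult hmat_mult_assoc hmat_mult_add_l hmat_mult_add_r)
  have ah: "hmat_mult (hmat_adj g) (hmat_adj h) = hmat_one" "hmat_mult (hmat_adj h) (hmat_adj g) = hmat_one"
    using h by (metis hmat_adj_mult hmat_adj_one)+
  have "hmat_mult (hmat_mult (hmat_adj g) (hmat_mult S g)) (hmat_mult h (hmat_mult T (hmat_adj h)))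
     = hmat_mult (hmat_adj g) (hmat_mult S (hmat_mult (hmat_mult g h) (hmat_mult T (hmat_adj h))))"
    by (simp add: hmat_mult_assoc)
  also have "\<dots> = hmat_mult (hmat_adj g) (hmat_mult (hmat_mult S T) (hmat_adj h))"
    by (simp add: h hmat_one_l hmat_mult_assoc)
  also have "\<dots> = hmat_one" by (simp add: T hmat_one_l ah)
  finally have I1: "hmat_mult (hmat_mult (hmat_adj g) (hmat_mult S g)) (hmat_mult h (hmat_mult T (hmat_adj h))) = hmat_one" .
  have "hmat_mult (hmat_mult h (hmat_mult T (hmat_adj h))) (hmat_mult (hmat_adj g) (hmat_mult S g))
     = hmat_mult h (hmat_mult T (hmat_mult (hmat_mult (hmat_adj h) (hmat_adj g)) (hmat_mult S g)))"
    by (simp add: hmat_mult_assoc)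
  also have "\<dots> = hmat_mult h (hmat_mult (hmat_mult T S) g)"
    by (simp add: ah hmat_one_l hmat_mult_assoc)
  also have "\<dots> = hmat_one" by (simp add: T hmat_one_l h)
  finally have I2: "hmat_mult (hmat_mult h (hmat_mult T (hmat_adj h))) (hmat_mult (hmat_adj g) (hmat_mult S g)) = hmat_one" .
  have "hmat_invertible (hmat_mult (hmat_adj g) (hmat_mult S g))"
    unfolding hmat_invertible_def using I1 I2 by blast
  then show ?thesis
    unfolding Ustar_def QQ hact_def using S' by simp
qed


lemma matrix_inv_props:
  fixes A :: "'a::field^'n^'n"
  assumes "det A \<noteq> 0"
  shows "A ** matrix_inv A = mat 1" "matrix_inv A ** A = mat 1"
proof -
  from assms have "invertible A" by (simp add: invertible_det_nz)
  then have "\<exists>A'. A ** A' = mat 1 \<and> A' ** A = mat 1" by (simp add: invertible_def)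
  then have "A ** matrix_inv A = mat 1 \<and> matrix_inv A ** A = mat 1"
    unfolding matrix_inv_def by (rule someI_ex)
  then show "A ** matrix_inv A = mat 1" "matrix_inv A ** A = mat 1" by auto
qed

lemma matrix_inv_mm:
  fixes A B :: "'a::field^'n^'n"
  assumes "det A \<noteq> 0" "det B \<noteq> 0"
  shows "matrix_inv (A ** B) = matrix_inv B ** matrix_inv A"
proof -
  have dAB: "det (A ** B) \<noteq> 0" using assms by (simp add: det_mul)
  have "matrix_inv (A ** B) = (matrix_inv B ** matrix_inv A) ** ((A ** B) ** matrix_inv (A ** B))"
  proof -
    have "(matrix_inv B ** matrix_inv A) ** (A ** B) = mat 1"
      by (metis assms matrix_inv_props matrix_mul_assoc matrix_mul_lid)
    then show ?thesis by (metis matrix_mul_assoc matrix_mul_lid)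
  qed
  also have "\<dots> = matrix_inv B ** matrix_inv A" using matrix_inv_props(1)[OF dAB] by simp
  finally show ?thesis .
qed

lemma det_Nmat:
  assumes "hmat_invertible g" shows "det (Nmat g) \<noteq> 0"
proof -
  obtain h where "hmat_mult g h = hmat_one" using assms unfolding hmat_invertible_def by auto
  then have "Nmat g ** Nmat h = mat 1" by (metis Nmat_mult Nmat_one)
  then have "det (Nmat g) * det (Nmat h) = 1" by (metis det_mul det_I)
  then show ?thesis by auto
qed

lemma invariance:
  assumes g: "hmat_invertible g" and Q: "Q \<in> Vstar"
  shows "hact Q g \<in> Vstar \<and> PhiStar (hact Q g) = PhiStar Q"
proof -
  have dM: "det (Mmat Q) \<noteq> 0" and QU: "Q \<in> Ustar" using Q by (auto simp: Vstar_def)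
  have dN: "det (Nmat g) \<noteq> 0" using det_Nmat[OF g] .
  have "det (Mmat (hact Q g)) \<noteq> 0" using dM dN by (simp add: Mmat_hact det_mul)
  moreover have "hact Q g \<in> Ustar" using Ustar_hact[OF QU g] .
  moreover have "PhiStar (hact Q g) = PhiStar Q"
  proof -
    have "PhiStar (hact Q g) = UVmat Q ** (Nmat g ** matrix_inv (Nmat g)) ** matrix_inv (Mmat Q)"
      by (simp add: PhiStar_def Mmat_hact UVmat_hact matrix_inv_mm[OF dM dN] matrix_mul_assoc)
    then show ?thesis by (simp add: matrix_inv_props[OF dN] PhiStar_def)
  qed
  ultimately show ?thesis by (simp add: Vstar_def)
qed



lemma sum_Basis_prod_gen:
  "(\<Sum>b\<in>(Basis::('a::euclidean_space \<times> 'b::euclidean_space) set). h b)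
     = (\<Sum>u\<in>Basis. h (u, 0)) + (\<Sum>v\<in>Basis. h (0, v))"
proof -
  have "inj_on (\<lambda>u. (u::'a, 0::'b)) Basis" "inj_on (\<lambda>u. (0::'a, u::'b)) Basis"
    by (auto intro!: inj_onI)
  thus ?thesis
    unfolding Basis_prod_def
    by (subst sum.union_disjoint) (auto simp: Basis_prod_def sum.reindex)
qed

lemma sum_Basis_vec_gen:
  "(\<Sum>b\<in>(Basis::('a::euclidean_space ^ 'n::finite) set). h b)
     = (\<Sum>i\<in>UNIV. \<Sum>u\<in>Basis. h (axis i u))"
proof -
  have B: "(Basis::('a ^ 'n) set) = (\<lambda>(i,u). axis i u) ` (UNIV \<times> Basis)"
    unfolding Basis_vec_def by auto
  have inj: "inj_on (\<lambda>(i,u). axis i u) (UNIV \<times> (Basis::'a set))"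
    by (auto intro!: inj_onI simp: axis_eq_axis dest: nonzero_Basis)
  show ?thesis
    unfolding B sum.reindex[OF inj] by (simp add: sum.cartesian_product case_prod_beta)
qed

lemma sum_Basis_cmat:
  "(\<Sum>b\<in>(Basis::(complex ^ 'n::finite ^ 'm::finite) set). h b)
     = (\<Sum>i\<in>UNIV. \<Sum>j\<in>UNIV. h (axis i (axis j 1)) + h (axis i (axis j \<i>)))"
  by (simp add: sum_Basis_vec_gen Basis_complex_def)

lemma sum_Basis_hpoint:
  "(\<Sum>b\<in>(Basis::('p::finite,'r::finite) hpoint set). h b)
    = (\<Sum>i\<in>UNIV. \<Sum>j\<in>UNIV. h ((axis i (axis j 1), 0), 0, 0) + h ((axis i (axis j \<i>), 0), 0, 0))
    + (\<Sum>i\<in>UNIV. \<Sum>j\<in>UNIV. h ((0, axis i (axis j 1)), 0, 0) + h ((0, axis i (axis j \<i>)), 0, 0))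
    + ((\<Sum>i\<in>UNIV. \<Sum>j\<in>UNIV. h (0, (axis i (axis j 1), 0), 0) + h (0, (axis i (axis j \<i>), 0), 0))
    + (\<Sum>i\<in>UNIV. \<Sum>j\<in>UNIV. h (0, (0, axis i (axis j 1)), 0) + h (0, (0, axis i (axis j \<i>)), 0)))
    + ((\<Sum>i\<in>UNIV. \<Sum>j\<in>UNIV. h (0, 0, (axis i (axis j 1), 0)) + h (0, 0, (axis i (axis j \<i>), 0)))
    + (\<Sum>i\<in>UNIV. \<Sum>j\<in>UNIV. h (0, 0, (0, axis i (axis j 1))) + h (0, 0, (0, axis i (axis j \<i>)))))"
  by (simp add: sum_Basis_prod_gen sum_Basis_cmat zero_prod_def add.assoc)


lemma Mmat_blocks:
  "Mmat ((Z, W), (X, Y), R) $ m $ n = (case m of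
        Inl a \<Rightarrow> (case n of Inl b \<Rightarrow> Z $ a $ b - X $ a $ b | Inr b \<Rightarrow> Y $ a $ b - W $ a $ b)
      | Inr a \<Rightarrow> (case n of Inl b \<Rightarrow> cnj (Y $ a $ b) + cnj (W $ a $ b) | Inr b \<Rightarrow> cnj (Z $ a $ b) + cnj (X $ a $ b)))"
  by (simp add: Mmat_def split: sum.split)

lemma axis_axis_nth: "axis i (axis j u) $ a $ b = (if a = i \<and> b = j then u else 0)"
  by (simp add: axis_def)

lemma F_AA: "(\<Sum>b\<in>(Basis::('p::finite,'r::finite) hpoint set). Mmat b $ m $ n * Mmat b $ m' $ n') = 0"
  apply (simp only: sum_Basis_hpoint zero_prod_def Mmat_blocks)
  apply (cases m; cases n; cases m'; cases n')
  apply (simp_all add: axis_axis_nth sum.distrib[symmetric])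
  apply (auto intro!: sum.neutral simp: algebra_simps split: if_split)
  done


lemma UVmat_blocks:
  "UVmat (P0, P1, (U, V)) $ i $ n = (case n of Inl b \<Rightarrow> U $ i $ b | Inr b \<Rightarrow> - V $ i $ b)"
  by (simp add: UVmat_def split: sum.split)

lemma F_AB: "(\<Sum>b\<in>(Basis::('p::finite,'r::finite) hpoint set). UVmat b $ i $ n * Mmat b $ m' $ n') = 0"
  apply (simp only: sum_Basis_hpoint zero_prod_def Mmat_blocks UVmat_blocks)
  apply (cases n; cases m'; cases n')
  apply (simp_all add: axis_axis_nth sum.distrib[symmetric])
  done

lemma F_BB: "(\<Sum>b\<in>(Basis::('p::finite,'r::finite) hpoint set). UVmat b $ i $ n * UVmat b $ i' $ n') = 0"
  apply (simp only: sum_Basis_hpoint zero_prod_def UVmat_blocks)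
  apply (cases n; cases n')
  apply (simp_all add: axis_axis_nth sum.distrib[symmetric])
  apply (auto intro!: sum.neutral simp: algebra_simps split: if_split)
  done


lemma bilin:
  assumes "finite S" "finite I" "finite J"
    and "\<And>p q. p \<in> I \<Longrightarrow> q \<in> J \<Longrightarrow> (\<Sum>b\<in>S. f b p * g b q) = (0::complex)"
  shows "(\<Sum>b\<in>S. (\<Sum>p\<in>I. \<alpha> p * f b p) * (\<Sum>q\<in>J. \<beta> q * g b q)) = 0"
proof -
  have "(\<Sum>b\<in>S. (\<Sum>p\<in>I. \<alpha> p * f b p) * (\<Sum>q\<in>J. \<beta> q * g b q))
      = (\<Sum>b\<in>S. \<Sum>p\<in>I. \<Sum>q\<in>J. (\<alpha> p * \<beta> q) * (f b p * g b q))"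
    by (simp add: sum_product algebra_simps)
  also have "\<dots> = (\<Sum>p\<in>I. \<Sum>q\<in>J. (\<alpha> p * \<beta> q) * (\<Sum>b\<in>S. f b p * g b q))"
    by (simp add: sum_distrib_left sum.swap[of _ S])
  also have "\<dots> = 0" using assms(4) by simp
  finally show ?thesis .
qed

lemma mmm_entry: "((X::complex^_^_) ** B ** Y) $ i $ j = (\<Sum>p\<in>UNIV. (X $ i $ fst p * Y $ snd p $ j) * B $ fst p $ snd p)"
proof -
  have "(X ** B ** Y) $ i $ j = (\<Sum>n\<in>UNIV. \<Sum>m\<in>UNIV. (X $ i $ m * Y $ n $ j) * B $ m $ n)"
    by (simp add: matrix_matrix_mult_def sum_distrib_right sum_distrib_left algebra_simps)
  also have "\<dots> = (\<Sum>m\<in>UNIV. \<Sum>n\<in>UNIV. (X $ i $ m * Y $ n $ j) * B $ m $ n)"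
    by (rule sum.swap)
  also have "\<dots> = (\<Sum>p\<in>UNIV \<times> UNIV. (X $ i $ fst p * Y $ snd p $ j) * B $ fst p $ snd p)"
    by (simp add: sum.cartesian_product split_def)
  finally show ?thesis by simp
qed

lemma mm_entry: "((C::complex^_^_) ** Y) $ i $ j = (\<Sum>n\<in>UNIV. Y $ n $ j * C $ i $ n)"
  by (simp add: matrix_matrix_mult_def mult.commute)

lemma S_AA: "(\<Sum>b\<in>(Basis::('p::finite,'r::finite) hpoint set). (X ** Mmat b ** Y) $ i $ j * (X' ** Mmat b ** Y') $ k $ l) = 0"
  unfolding mmm_entry by (rule bilin) (auto simp: F_AA)

lemma S_AB: "(\<Sum>b\<in>(Basis::('p::finite,'r::finite) hpoint set). (UVmat b ** Y) $ i $ j * (X ** Mmat b ** Y') $ k $ l) = 0"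
  unfolding mmm_entry unfolding mm_entry by (rule bilin) (auto simp: F_AB)

lemma S_BB: "(\<Sum>b\<in>(Basis::('p::finite,'r::finite) hpoint set). (UVmat b ** Y) $ i $ j * (UVmat b ** Y') $ k $ l) = 0"
  unfolding mm_entry by (rule bilin) (auto simp: F_BB)



definition mder :: "(real \<Rightarrow> complex^'n::finite^'m::finite) \<Rightarrow> complex^'n^'m \<Rightarrow> real \<Rightarrow> bool" where
  "mder A A' t0 \<longleftrightarrow> (\<forall>i j. ((\<lambda>t. A t $ i $ j) has_vector_derivative A' $ i $ j) (at t0))"

lemma mder_const: "mder (\<lambda>t. C) 0 t0"
  by (simp add: mder_def)

lemma aff_deriv0: "((\<lambda>t. t *\<^sub>R c) has_vector_derivative (c::'a::real_normed_vector)) (at t0)"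
  using has_vector_derivative_scaleR[of "\<lambda>t. t" 1 t0 UNIV "\<lambda>_. c" 0] by simp
lemma aff_deriv: "((\<lambda>t. a + t *\<^sub>R c) has_vector_derivative (c::'a::real_normed_vector)) (at t0)"
  using has_vector_derivative_add[OF has_vector_derivative_const aff_deriv0] by simp

lemma mder_aff: "mder (\<lambda>t. A + t *\<^sub>R B) B t0"
  by (simp add: mder_def aff_deriv)

lemma mder_add: "mder A A' t0 \<Longrightarrow> mder B B' t0 \<Longrightarrow> mder (\<lambda>t. A t + B t) (A' + B') t0"
  by (simp add: mder_def has_vector_derivative_add)

lemma mder_diff: "mder A A' t0 \<Longrightarrow> mder B B' t0 \<Longrightarrow> mder (\<lambda>t. A t - B t) (A' - B') t0"
  by (simp add: mder_def has_vector_derivative_diff)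

lemma mder_mm:
  assumes "mder A A' t0" "mder B B' t0"
  shows "mder (\<lambda>t. A t ** B t) (A t0 ** B' + A' ** B t0) t0"
  unfolding mder_def
proof (intro allI)
  fix i j
  have "((\<lambda>t. \<Sum>k\<in>UNIV. A t $ i $ k * B t $ k $ j) has_vector_derivative
         (\<Sum>k\<in>UNIV. A t0 $ i $ k * B' $ k $ j + A' $ i $ k * B t0 $ k $ j)) (at t0)"
    using assms unfolding mder_def
    by (intro has_vector_derivative_sum has_vector_derivative_mult) auto
  then show "((\<lambda>t. (A t ** B t) $ i $ j) has_vector_derivative (A t0 ** B' + A' ** B t0) $ i $ j) (at t0)"
    by (simp add: matrix_matrix_mult_def sum.distrib)
qed

lemma mder_transform:
  assumes "mder A A' t0" "open S" "t0 \<in> S" "\<And>t. t \<in> S \<Longrightarrow> A t = B t"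
  shows "mder B A' t0"
  unfolding mder_def
proof (intro allI)
  fix i j
  show "((\<lambda>t. B t $ i $ j) has_vector_derivative A' $ i $ j) (at t0)"
    using has_vector_derivative_transform_within_open[of "\<lambda>t. A t $ i $ j" "A' $ i $ j" t0 S "\<lambda>t. B t $ i $ j"] assms
    unfolding mder_def by auto
qed

lemma differentiable_prod':
  fixes f :: "'i \<Rightarrow> real \<Rightarrow> complex"
  assumes "\<And>i. i \<in> I \<Longrightarrow> f i differentiable (at x)"
  shows "(\<lambda>x. \<Prod>i\<in>I. f i x) differentiable (at x)"
proof -
  from assms obtain f' where "\<And>i. i \<in> I \<Longrightarrow> (f i has_derivative f' i) (at x)"
    unfolding differentiable_def by metis
  then show ?thesis unfolding differentiable_def by (blast intro: has_derivative_prod)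
qed

lemma det_aff_diff: "(\<lambda>t. det (A + t *\<^sub>R B :: complex^'n::finite^'n)) differentiable (at t0)"
  unfolding det_def
proof (intro differentiable_sum ballI finite_permutations finite_UNIV differentiable_mult differentiable_const differentiable_prod')
  fix p i
  show "(\<lambda>t. (A + t *\<^sub>R B) $ i $ p i) differentiable at t0"
    using aff_deriv[of "A $ i $ p i" "B $ i $ p i" t0] differentiableI_vector by auto
qed simp

lemma det_aff_cont: "continuous_on UNIV (\<lambda>t. det (A + t *\<^sub>R B :: complex^'n::finite^'n))"
  by (rule differentiable_imp_continuous_on) (simp add: differentiable_on_def det_aff_diff)

lemma det_aff_open: "open {t. det (A + t *\<^sub>R B :: complex^'n::finite^'n) \<noteq> 0}"
  by (rule open_Collect_neq[OF det_aff_cont continuous_on_const])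

lemma inv_cramer:
  fixes A :: "'a::field^'n::finite^'n"
  assumes d: "det A \<noteq> 0"
  shows "matrix_inv A $ i $ k = det (\<chi> a b. if b = i then (\<chi> a. if a = k then 1 else 0) $ a else A $ a $ b) / det A"
proof -
  define x where "x = (\<chi> i. matrix_inv A $ i $ k)"
  define e where "e = (\<chi> a. if a = k then 1 else (0::'a))"
  have "(A *v x) $ a = e $ a" for a
  proof -
    have "(A *v x) $ a = (A ** matrix_inv A) $ a $ k"
      by (simp add: x_def matrix_vector_mult_def matrix_matrix_mult_def)
    also have "\<dots> = e $ a" using matrix_inv_props(1)[OF d] by (simp add: e_def mat_def)
    finally show ?thesis .
  qed
  then have "A *v x = e" by (simp add: vec_eq_iff)
  then have "x = (\<chi> i. det(\<chi> a b. if b=i then e$a else A$a$b) / det A)"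
    using cramer[OF d] by blast
  then have "x $ i = det(\<chi> a b. if b=i then e$a else A$a$b) / det A" by simp
  then show ?thesis unfolding x_def e_def by simp
qed


lemma mder_unique: "mder A X t0 \<Longrightarrow> mder A Y t0 \<Longrightarrow> X = Y"
  unfolding mder_def vec_eq_iff by (metis vector_derivative_unique_at)

lemma mder_inv:
  fixes M0 B :: "complex^'n::finite^'n"
  assumes d: "det M0 \<noteq> 0"
  shows "mder (\<lambda>t. matrix_inv (M0 + t *\<^sub>R B)) (- (matrix_inv M0 ** B ** matrix_inv M0)) 0"
proof -
  define S where "S = {t. det (M0 + t *\<^sub>R B) \<noteq> 0}"
  have S: "open S" "0 \<in> S" using det_aff_open d by (auto simp: S_def)
  define G where "G = (\<lambda>t. matrix_inv (M0 + t *\<^sub>R B))"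
  define C0 where "C0 = (\<lambda>i k. (\<chi> a b. if b = i then (\<chi> a. if a = k then 1 else 0) $ a else M0 $ a $ b) :: complex^'n^'n)"
  define C1 where "C1 = (\<lambda>i::'n. (\<chi> a b. if b = i then 0 else B $ a $ b) :: complex^'n^'n)"
  define f where "f = (\<lambda>i k t. det (C0 i k + t *\<^sub>R C1 i) / det (M0 + t *\<^sub>R B))"
  have Gf: "G t $ i $ k = f i k t" if "t \<in> S" for t i k
  proof -
    have "(\<chi> a b. if b = i then (\<chi> a. if a = k then 1 else 0) $ a else (M0 + t *\<^sub>R B) $ a $ b) = C0 i k + t *\<^sub>R C1 i"
      by (simp add: C0_def C1_def vec_eq_iff)
    then show ?thesis
      using inv_cramer[of "M0 + t *\<^sub>R B" i k] that by (simp add: S_def G_def f_def)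
  qed
  have fd: "f i k differentiable (at 0)" for i k
    unfolding f_def using d by (intro differentiable_divide det_aff_diff) auto
  define D where "D = (\<chi> i k. vector_derivative (f i k) (at 0))"
  have "mder (\<lambda>t. \<chi> i k. f i k t) D 0"
    unfolding mder_def D_def using fd by (simp add: vector_derivative_works[symmetric])
  then have GD: "mder G D 0"
    by (rule mder_transform[OF _ S]) (simp add: Gf vec_eq_iff)
  have G0: "G 0 = matrix_inv M0" by (simp add: G_def)
  have "mder (\<lambda>t. G t ** (M0 + t *\<^sub>R B)) (G 0 ** B + D ** (M0 + 0 *\<^sub>R B)) 0"
    by (rule mder_mm[OF GD mder_aff])
  moreover have "mder (\<lambda>t. G t ** (M0 + t *\<^sub>R B)) 0 0"
    by (rule mder_transform[OF mder_const S]) (simp add: G_def S_def matrix_inv_props)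
  ultimately have E: "matrix_inv M0 ** B + D ** M0 = 0"
    using mder_unique G0 by fastforce
  have "D = D ** M0 ** matrix_inv M0"
    by (simp add: matrix_inv_props[OF d] flip: matrix_mul_assoc)
  also have "\<dots> = (matrix_inv M0 ** B + D ** M0) ** matrix_inv M0 - matrix_inv M0 ** B ** matrix_inv M0"
    by (simp add: vec_eq_iff matrix_matrix_mult_def sum.distrib algebra_simps)
  also have "\<dots> = - (matrix_inv M0 ** B ** matrix_inv M0)" by (simp add: E)
  finally show ?thesis using GD by (simp add: G_def)
qed



lemma Mmat_lin: "Mmat (x + t *\<^sub>R v) = Mmat x + t *\<^sub>R Mmat (v::('p::finite,'r::finite) hpoint)"
  by (cases x; cases v) (auto simp: Mmat_def vec_eq_iff algebra_simps split: sum.split)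

lemma UVmat_lin: "UVmat (x + t *\<^sub>R v) = UVmat x + t *\<^sub>R UVmat (v::('p::finite,'r::finite) hpoint)"
  by (cases x; cases v) (auto simp: UVmat_def vec_eq_iff algebra_simps split: sum.split)

lemma dderiv_eq:
  assumes "mder (\<lambda>t. \<Psi> (x + t *\<^sub>R v)) Y 0" "open S" "0 \<in> S"
    and "\<And>t. t \<in> S \<Longrightarrow> f (x + t *\<^sub>R v) = \<Psi> (x + t *\<^sub>R v) $ a $ c"
  shows "dderiv v f x = Y $ a $ c"
proof -
  have "((\<lambda>t. \<Psi> (x + t *\<^sub>R v) $ a $ c) has_vector_derivative Y $ a $ c) (at 0)"
    using assms(1) by (simp add: mder_def)
  then have "((\<lambda>t. f (x + t *\<^sub>R v)) has_vector_derivative Y $ a $ c) (at 0)"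
    by (rule has_vector_derivative_transform_within_open[OF _ assms(2,3)]) (simp add: assms(4))
  then show ?thesis unfolding dderiv_def by (rule vector_derivative_at)
qed

definition Psi1 :: "('p::finite,'r::finite) hpoint \<Rightarrow> ('p,'r) hpoint \<Rightarrow> complex^('p+'p)^'r" where
  "Psi1 v y = UVmat v ** matrix_inv (Mmat y) - UVmat y ** (matrix_inv (Mmat y) ** Mmat v ** matrix_inv (Mmat y))"

lemma first_deriv:
  fixes y v :: "('p::finite,'r::finite) hpoint"
  assumes d: "det (Mmat y) \<noteq> 0"
  shows "dderiv v (\<lambda>Q. PhiStar Q $ a $ c) y = Psi1 v y $ a $ c"
proof -
  have "mder (\<lambda>t. (UVmat y + t *\<^sub>R UVmat v) ** matrix_inv (Mmat y + t *\<^sub>R Mmat v))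
      ((UVmat y + 0 *\<^sub>R UVmat v) ** (- (matrix_inv (Mmat y) ** Mmat v ** matrix_inv (Mmat y)))
        + UVmat v ** matrix_inv (Mmat y + 0 *\<^sub>R Mmat v)) 0"
    by (rule mder_mm[OF mder_aff mder_inv[OF d]])
  then have "mder (\<lambda>t. PhiStar (y + t *\<^sub>R v)) (Psi1 v y) 0"
    by (simp add: PhiStar_def Mmat_lin UVmat_lin Psi1_def mm_neg_r)
  then show ?thesis
    by (rule dderiv_eq[where S=UNIV]) (simp_all add: PhiStar_def)
qed


lemma dderiv_eq':
  assumes "mder \<Phi> Y 0" "open S" "0 \<in> S"
    and "\<And>t. t \<in> S \<Longrightarrow> f (x + t *\<^sub>R v) = \<Phi> t $ a $ c"
  shows "dderiv v f x = Y $ a $ c"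
proof -
  have "((\<lambda>t. \<Phi> t $ a $ c) has_vector_derivative Y $ a $ c) (at 0)"
    using assms(1) by (simp add: mder_def)
  then have "((\<lambda>t. f (x + t *\<^sub>R v)) has_vector_derivative Y $ a $ c) (at 0)"
    by (rule has_vector_derivative_transform_within_open[OF _ assms(2,3)]) (simp add: assms(4))
  then show ?thesis unfolding dderiv_def by (rule vector_derivative_at)
qed

lemma mm_two: "(A::complex^_^_) ** (2 * B) = 2 * (A ** B)"
  by (simp add: vec_eq_iff matrix_matrix_mult_def sum_distrib_left algebra_simps)

lemma second_deriv:
  fixes x b :: "('p::finite,'r::finite) hpoint"
  assumes d: "det (Mmat x) \<noteq> 0"
  defines "N \<equiv> matrix_inv (Mmat x)"
  shows "dderiv b (dderiv b (\<lambda>Q. PhiStar Q $ a $ c)) x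
     = 2 * (UVmat x ** N ** Mmat b ** N ** Mmat b ** N) $ a $ c - 2 * (UVmat b ** N ** Mmat b ** N) $ a $ c"
proof -
  define S where "S = {t. det (Mmat x + t *\<^sub>R Mmat b) \<noteq> 0}"
  have S: "open S" "0 \<in> S" using det_aff_open d by (auto simp: S_def)
  define G where "G = (\<lambda>t. matrix_inv (Mmat x + t *\<^sub>R Mmat b))"
  have GD: "mder G (- (N ** Mmat b ** N)) 0"
    unfolding G_def N_def by (rule mder_inv[OF d])
  have G0: "G 0 = N" by (simp add: G_def N_def)
  note R = mder_diff[OF mder_mm[OF mder_const GD] mder_mm[OF mder_aff[of "UVmat x" "UVmat b"] mder_mm[OF mder_mm[OF GD mder_const[of "Mmat b"]] GD]]]
  have "dderiv b (dderiv b (\<lambda>Q. PhiStar Q $ a $ c)) x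
    = (UVmat b ** - (N ** Mmat b ** N) + 0 ** G 0 -
       ((UVmat x + 0 *\<^sub>R UVmat b) ** (G 0 ** Mmat b ** - (N ** Mmat b ** N) + (G 0 ** 0 + - (N ** Mmat b ** N) ** Mmat b) ** G 0) +
        UVmat b ** (G 0 ** Mmat b ** G 0))) $ a $ c"
  proof (rule dderiv_eq'[OF R S])
    fix t assume t: "t \<in> S"
    then have "det (Mmat (x + t *\<^sub>R b)) \<noteq> 0" by (simp add: S_def Mmat_lin)
    then show "dderiv b (\<lambda>Q. PhiStar Q $ a $ c) (x + t *\<^sub>R b) =
        (UVmat b ** G t - (UVmat x + t *\<^sub>R UVmat b) ** (G t ** Mmat b ** G t)) $ a $ c"
      by (simp add: first_deriv Psi1_def Mmat_lin UVmat_lin G_def)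
  qed
  also have "\<dots> = 2 * (UVmat x ** N ** Mmat b ** N ** Mmat b ** N) $ a $ c - 2 * (UVmat b ** N ** Mmat b ** N) $ a $ c"
    by (simp add: G0 mm_simps mm_two)
  finally show ?thesis .
qed


lemma ent3: "((P::complex^_^_) ** B ** N) $ a $ c = (\<Sum>k\<in>UNIV. P $ a $ k * (mat 1 ** B ** N) $ k $ c)"
  by (simp only: matrix_mul_lid flip: matrix_mul_assoc) (simp add: matrix_matrix_mult_def)

lemma tau_zero:
  fixes x :: "('p::finite,'r::finite) hpoint"
  assumes d: "det (Mmat x) \<noteq> 0"
  shows "tau (\<lambda>Q. PhiStar Q $ a $ c) x = 0"
proof -
  define N where "N = matrix_inv (Mmat x)"
  have "tau (\<lambda>Q. PhiStar Q $ a $ c) x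
     = (\<Sum>b\<in>(Basis::('p,'r) hpoint set). 2 * (UVmat x ** N ** Mmat b ** N ** Mmat b ** N) $ a $ c - 2 * (UVmat b ** N ** Mmat b ** N) $ a $ c)"
    unfolding tau_def N_def by (simp add: second_deriv[OF d])
  also have "\<dots> = 2 * (\<Sum>b\<in>(Basis::('p,'r) hpoint set). (UVmat x ** N ** Mmat b ** N ** Mmat b ** N) $ a $ c)
      - 2 * (\<Sum>b\<in>(Basis::('p,'r) hpoint set). (UVmat b ** N ** Mmat b ** N) $ a $ c)"
    by (simp add: sum_subtractf sum_distrib_left)
  also have "(\<Sum>b\<in>(Basis::('p,'r) hpoint set). (UVmat x ** N ** Mmat b ** N ** Mmat b ** N) $ a $ c) = 0"
  proof -
    have "(\<Sum>b\<in>(Basis::('p,'r) hpoint set). (UVmat x ** N ** Mmat b ** N ** Mmat b ** N) $ a $ c)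
       = (\<Sum>b\<in>(Basis::('p,'r) hpoint set). \<Sum>k\<in>UNIV. (UVmat x ** N ** Mmat b ** N) $ a $ k * (mat 1 ** Mmat b ** N) $ k $ c)"
      by (rule sum.cong[OF refl], rule ent3)
    also have "\<dots> = (\<Sum>k\<in>UNIV. \<Sum>b\<in>(Basis::('p,'r) hpoint set). (UVmat x ** N ** Mmat b ** N) $ a $ k * (mat 1 ** Mmat b ** N) $ k $ c)"
      by (rule sum.swap)
    also have "\<dots> = 0" by (simp only: S_AA) simp
    finally show ?thesis .
  qed
  also have "(\<Sum>b\<in>(Basis::('p,'r) hpoint set). (UVmat b ** N ** Mmat b ** N) $ a $ c) = 0"
  proof -
    have "(\<Sum>b\<in>(Basis::('p,'r) hpoint set). (UVmat b ** N ** Mmat b ** N) $ a $ c)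
       = (\<Sum>b\<in>(Basis::('p,'r) hpoint set). \<Sum>k\<in>UNIV. (UVmat b ** N) $ a $ k * (mat 1 ** Mmat b ** N) $ k $ c)"
      by (rule sum.cong[OF refl], rule ent3)
    also have "\<dots> = (\<Sum>k\<in>UNIV. \<Sum>b\<in>(Basis::('p,'r) hpoint set). (UVmat b ** N) $ a $ k * (mat 1 ** Mmat b ** N) $ k $ c)"
      by (rule sum.swap)
    also have "\<dots> = 0" by (simp only: S_AB) simp
    finally show ?thesis .
  qed
  finally show ?thesis by simp
qed

lemma expand4: "(\<Sum>b\<in>S. (p b - q b) * (r b - s b)) = (\<Sum>b\<in>S. p b * r b) - (\<Sum>b\<in>S. p b * s b)
   - (\<Sum>b\<in>S. r b * q b) + (\<Sum>b\<in>S. q b * (s b::complex))"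
  by (simp add: sum_subtractf sum.distrib algebra_simps)

lemma kappa_zero:
  fixes x :: "('p::finite,'r::finite) hpoint"
  assumes d: "det (Mmat x) \<noteq> 0"
  shows "kappa (\<lambda>Q. PhiStar Q $ a $ c) (\<lambda>Q. PhiStar Q $ a' $ c') x = 0"
proof -
  define N where "N = matrix_inv (Mmat x)"
  have e: "Psi1 b x $ i $ j = (UVmat b ** N) $ i $ j - ((UVmat x ** N) ** Mmat b ** N) $ i $ j" for b i j
    by (simp add: Psi1_def N_def matrix_mul_assoc)
  have "kappa (\<lambda>Q. PhiStar Q $ a $ c) (\<lambda>Q. PhiStar Q $ a' $ c') x
     = (\<Sum>b\<in>(Basis::('p,'r) hpoint set). ((UVmat b ** N) $ a $ c - ((UVmat x ** N) ** Mmat b ** N) $ a $ c)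
                  * ((UVmat b ** N) $ a' $ c' - ((UVmat x ** N) ** Mmat b ** N) $ a' $ c'))"
    unfolding kappa_def by (simp add: first_deriv[OF d] e)
  also have "\<dots> = (\<Sum>b\<in>(Basis::('p,'r) hpoint set). (UVmat b ** N) $ a $ c * (UVmat b ** N) $ a' $ c')
      - (\<Sum>b\<in>(Basis::('p,'r) hpoint set). (UVmat b ** N) $ a $ c * ((UVmat x ** N) ** Mmat b ** N) $ a' $ c')
      - (\<Sum>b\<in>(Basis::('p,'r) hpoint set). (UVmat b ** N) $ a' $ c' * ((UVmat x ** N) ** Mmat b ** N) $ a $ c)
      + (\<Sum>b\<in>(Basis::('p,'r) hpoint set). ((UVmat x ** N) ** Mmat b ** N) $ a $ c * ((UVmat x ** N) ** Mmat b ** N) $ a' $ c')"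
    by (rule expand4)
  also have "\<dots> = 0" by (simp only: S_AA S_AB S_BB) simp
  finally show ?thesis .
qed


theorem proposition10p1:
  fixes Phi_comp :: "'r::finite \<Rightarrow> ('p::finite + 'p) \<Rightarrow> ('p, 'r) hpoint \<Rightarrow> complex"
  defines "Phi_comp \<equiv> (\<lambda>a b Q. PhiStar Q $ a $ b)"
  shows "orthogonal_harmonic_family (Vstar :: ('p, 'r) hpoint set) (range (\<lambda>(a, b). Phi_comp a b))
    \<and> (\<forall>g Q a b. hmat_invertible g \<longrightarrow> Q \<in> (Vstar :: ('p, 'r) hpoint set) \<longrightarrow>
          hact Q g \<in> Vstar \<and> Phi_comp a b (hact Q g) = Phi_comp a b Q)"
proof -
  have T: "\<forall>\<phi>\<in>range (\<lambda>(a, b). Phi_comp a b). \<forall>x\<in>(Vstar :: ('p, 'r) hpoint set). tau \<phi> x = 0"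
    by (auto simp: Phi_comp_def Vstar_def tau_zero)
  have K: "\<forall>\<phi>\<in>range (\<lambda>(a, b). Phi_comp a b). \<forall>\<psi>\<in>range (\<lambda>(a, b). Phi_comp a b).
      \<forall>x\<in>(Vstar :: ('p, 'r) hpoint set). kappa \<phi> \<psi> x = 0"
    by (auto simp: Phi_comp_def Vstar_def kappa_zero)
  have I: "\<forall>g Q a b. hmat_invertible g \<longrightarrow> Q \<in> (Vstar :: ('p, 'r) hpoint set) \<longrightarrow>
          hact Q g \<in> Vstar \<and> Phi_comp a b (hact Q g) = Phi_comp a b Q"
    unfolding Phi_comp_def using invariance by metis
  show ?thesis using T K I unfolding orthogonal_harmonic_family_def by blast
qed

end
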